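(* Let $P_m(z)=\sum_{j=0}^m \frac{(2m-j)!}{j!(m-j)!}z^j$ and $R_m(z)=P_m(z)/P_m(-z)$. (i) Let $m\ge3$ and let $\pm\mathrm{i}r$ ($r\in\mathbb{R}\setminus\{0\}$) be a pair of nonzero zeros of $P_m(z)-P_m(-z)$. For $t\in\mathbb{C}$ with $|t|$ small let $\hat z_{+}(t)$ and $\hat z_{-}(t)$ be the unique solutions of $R_m(z)=e^t$ near $\mathrm{i}r$ and near $-\mathrm{i}r$, respectively. Then, as $|t|\to0$, $$R_m'(\hat z_{+}(t))-R_m'(\hat z_{-}(t))=\mathcal{O}(t)\quad\text{and}\quad R_m'(\hat z_{+}(t))=\mathcal{O}(1).$$ (ii) The same holds for $m\ge2$ when $\pm\mathrm{i}r$ is a pair of zeros of $P_m(z)+P_m(-z)$ and $\hat z_\pm(t)$ are the unique solutions of $R_m(z)=-e^t$ near $\pm\mathrm{i}r$.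
   Context: $R_m$ is the stability function of the $m$-stage Gauss Runge–Kutta method (the $(m,m)$-Padé approximant of $e^z$). The zeros of $P_m(z)\mp P_m(-z)$ lie on the imaginary axis and, for small $|t|$, near each nonzero such zero there is exactly one solution of $R_m(z)=\pm e^t$, depending analytically on $t$. *)

theory Defs
  imports "HOL-Analysis.Analysis" "HOL-Library.Landau_Symbols"
begin

definition Pm :: "nat \<Rightarrow> complex \<Rightarrow> complex" where
  "Pm m z = (\<Sum>j=0..m. of_real (fact (2*m - j) / (fact j * fact (m - j))) * z ^ j)"

definition Rm :: "nat \<Rightarrow> complex \<Rightarrow> complex" where
  "Rm m z = Pm m z / Pm m (- z)"

definition local_sol_branch :: "nat \<Rightarrow> complex \<Rightarrow> complex \<Rightarrow> (complex \<Rightarrow> complex) \<Rightarrow> bool" where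
  "local_sol_branch m s c zf \<longleftrightarrow>
     (\<exists>\<delta>>0. \<exists>\<epsilon>>0. \<forall>t. norm t < \<delta> \<longrightarrow>
        zf t \<in> ball c \<epsilon> \<and> Rm m (zf t) = s * exp t \<and>
        (\<forall>z\<in>ball c \<epsilon>. Rm m z = s * exp t \<longrightarrow> z = zf t))"

end

theory Submission imports Defs "HOL-Complex_Analysis.Complex_Analysis" begin

lemma Pm_hol: "Pm m holomorphic_on S"
  unfolding Pm_def by (intro holomorphic_intros)

lemma Pm_cont: "continuous_on S (Pm m)"
  by (rule holomorphic_on_imp_continuous_on[OF Pm_hol])

lemma openA: "open {z. Pm m (- z) \<noteq> 0}"
proof -
  have "continuous_on UNIV (\<lambda>z. Pm m (- z))"
    by (intro continuous_on_compose2[OF Pm_cont[of UNIV m]] continuous_intros) auto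
  then show ?thesis by (intro open_Collect_neq) auto
qed

lemma Rm_hol: "Rm m holomorphic_on {z. Pm m (- z) \<noteq> 0}"
proof -
  have "(\<lambda>z. Pm m (- z)) holomorphic_on UNIV"
    by (intro holomorphic_on_compose_gen[OF _ Pm_hol[of m UNIV], unfolded o_def] holomorphic_intros) auto
  then show ?thesis unfolding Rm_def[abs_def]
    by (intro holomorphic_intros Pm_hol) (auto intro: holomorphic_on_subset)
qed

lemma Rm_nz: "Rm m z \<noteq> 0 \<Longrightarrow> Pm m z \<noteq> 0 \<and> Pm m (- z) \<noteq> 0"
  unfolding Rm_def by auto

lemma branch:
  assumes br: "local_sol_branch m s c zf" and s: "s = 1 \<or> s = -1"
  shows "\<exists>\<psi> D. (\<psi> has_field_derivative D) (at 0) \<and>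
           eventually (\<lambda>t. deriv (Rm m) (zf t) = \<psi> t) (nhds 0)"
proof -
  obtain \<delta> \<epsilon> where dp: "\<delta> > 0" and ep: "\<epsilon> > 0" and
    H: "\<And>t. norm t < \<delta> \<Longrightarrow> zf t \<in> ball c \<epsilon> \<and> Rm m (zf t) = s * exp t \<and>
        (\<forall>z\<in>ball c \<epsilon>. Rm m z = s * exp t \<longrightarrow> z = zf t)"
    using br unfolding local_sol_branch_def by blast
  define f where "f = Rm m"
  define A where "A = {z. Pm m (- z) \<noteq> 0}"
  define c' where "c' = zf 0"
  have ss: "s * s = 1" using s by auto
  have snz: "s \<noteq> 0" using s by auto
  have fc': "f c' = s" using H[of 0] dp unfolding f_def c'_def by simp
  have c'b: "c' \<in> ball c \<epsilon>" using H[of 0] dp unfolding c'_def by simp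
  have oA: "open A" unfolding A_def by (rule openA)
  have c'A: "c' \<in> A" using Rm_nz[of m c'] fc' snz unfolding A_def f_def by auto
  have holf: "f holomorphic_on A" unfolding f_def A_def by (rule Rm_hol)
  have contf: "continuous (at c') f"
    using holf oA c'A holomorphic_on_imp_continuous_on continuous_on_eq_continuous_at by blast
  define L where "L z = Ln (s * f z)" for z
  have L0: "L c' = 0" unfolding L_def fc' ss by simp
  have contL: "continuous (at c') L"
  proof -
    have "continuous (at c') (\<lambda>z. s * f z)" using contf by (intro continuous_intros)
    moreover have "continuous (at (s * f c')) Ln"
      using fc' ss by (intro continuous_at_Ln) auto
    ultimately show ?thesis unfolding L_def
      using continuous_at_compose[of c' "\<lambda>z. s * f z" Ln] by (simp add: o_def)
  qed
  have ev1: "eventually (\<lambda>z. norm (L z) < \<delta>) (nhds c')"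
  proof -
    have "(L \<longlongrightarrow> L c') (nhds c')" 
      using contL tendsto_at_iff_tendsto_nhds continuous_at by blast
    from tendstoD[OF this dp] show ?thesis using L0 by simp
  qed
  have ev2: "eventually (\<lambda>z. f z \<noteq> 0) (nhds c')"
  proof -
    have "(f \<longlongrightarrow> f c') (nhds c')" 
      using contf tendsto_at_iff_tendsto_nhds continuous_at by blast
    then show ?thesis using snz fc' tendsto_imp_eventually_ne by metis
  qed
  have ev3: "eventually (\<lambda>z. z \<in> ball c \<epsilon> \<inter> A) (nhds c')"
    using c'b c'A oA by (intro eventually_nhds_in_open) auto
  obtain \<rho> where rp: "\<rho> > 0" and R: "\<And>z. dist z c' < \<rho> \<Longrightarrow> norm (L z) < \<delta> \<and> f z \<noteq> 0 \<and> z \<in> ball c \<epsilon> \<inter> A"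
    using eventually_conj[OF ev1 eventually_conj[OF ev2 ev3]] unfolding eventually_nhds_metric by blast
  define U where "U = ball c' \<rho>"
  have oU: "open U" unfolding U_def by simp
  have c'U: "c' \<in> U" unfolding U_def using rp by simp
  have UA: "U \<subseteq> A" using R unfolding U_def by (auto simp: dist_commute)
  have zU: "z = zf (L z)" if "z \<in> U" for z
  proof -
    have R': "norm (L z) < \<delta>" "f z \<noteq> 0" "z \<in> ball c \<epsilon>" using R[of z] that unfolding U_def by (auto simp: dist_commute)
    have "exp (L z) = s * f z" unfolding L_def using R' snz by simp
    then have "f z = s * exp (L z)" using ss by (metis mult.assoc mult_1)
    then show ?thesis using H[OF R'(1)] R'(3) unfolding f_def by blast
  qed
  have injf: "inj_on f U"
  proof
    fix x y assume "x \<in> U" "y \<in> U" "f x = f y"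
    then have "L x = L y" unfolding L_def by simp
    then show "x = y" using zU[of x] zU[of y] \<open>x \<in> U\<close> \<open>y \<in> U\<close> by simp
  qed
  have holU: "f holomorphic_on U" using holf UA by (rule holomorphic_on_subset)
  obtain g where holg: "g holomorphic_on (f ` U)" and gf: "\<And>z. z \<in> U \<Longrightarrow> g (f z) = z"
    using holomorphic_has_inverse[OF holU oU injf] by metis
  have ofU: "open (f ` U)" by (rule open_mapping_thm3[OF holU oU injf])
  have sfU: "s \<in> f ` U" using c'U fc' by force
  have ev4: "eventually (\<lambda>t. s * exp t \<in> f ` U) (nhds 0)"
  proof -
    have "isCont (\<lambda>t. s * exp t) (0::complex)" by (intro continuous_intros)
    then have "((\<lambda>t. s * exp t) \<longlongrightarrow> s * exp 0) (nhds (0::complex))"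
      using tendsto_at_iff_tendsto_nhds continuous_at by blast
    then show ?thesis using topological_tendstoD[OF _ ofU] sfU by simp
  qed
  have ev5: "eventually (\<lambda>t. norm t < \<delta>) (nhds (0::complex))"
    using eventually_nhds_in_open[of "ball (0::complex) \<delta>" 0] dp by simp
  have ev: "eventually (\<lambda>t. deriv (Rm m) (zf t) = deriv f (g (s * exp t))) (nhds 0)"
    using eventually_conj[OF ev4 ev5]
  proof (rule eventually_mono)
    fix t assume t: "s * exp t \<in> f ` U \<and> norm t < \<delta>"
    then obtain z where z: "z \<in> U" "f z = s * exp t" by auto
    have "z \<in> ball c \<epsilon>" using R[of z] z(1) unfolding U_def by (auto simp: dist_commute)
    then have "z = zf t" using H[of t] t z unfolding f_def by blast
    then show "deriv (Rm m) (zf t) = deriv f (g (s * exp t))" using gf[OF z(1)] z unfolding f_def by simp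
  qed
  have d1: "((\<lambda>t. s * exp t) has_field_derivative s * exp 0) (at 0)"
    by (intro derivative_eq_intros) auto
  have d2: "(g has_field_derivative deriv g s) (at s)"
    using holomorphic_derivI[OF holg ofU sfU] .
  have gs: "g s = c'" using gf[OF c'U] fc' by simp
  have d3: "(deriv f has_field_derivative deriv (deriv f) c') (at c')"
    using holomorphic_derivI[OF holomorphic_deriv[OF holf oA] oA c'A] .
  have d2': "(g has_field_derivative deriv g s) (at ((\<lambda>t. s * exp t) 0))"
    using d2 by simp
  have e1: "((\<lambda>t. g (s * exp t)) has_field_derivative deriv g s * s) (at 0)"
    using DERIV_chain2[OF d2' d1[simplified]] by simp
  have d3': "(deriv f has_field_derivative deriv (deriv f) c') (at ((\<lambda>t. g (s * exp t)) 0))"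
    using d3 gs by simp
  have "((\<lambda>t. deriv f (g (s * exp t))) has_field_derivative deriv (deriv f) c' * (deriv g s * s)) (at 0)"
    using DERIV_chain2[OF d3' e1] by simp
  then show ?thesis using ev by blast
qed


lemma branch_eq:
  assumes "local_sol_branch m s c zf"
  shows "eventually (\<lambda>t. Rm m (zf t) = s * exp t) (nhds 0)"
proof -
  obtain \<delta> where dp: "\<delta> > 0" and H: "\<And>t. norm t < \<delta> \<Longrightarrow> Rm m (zf t) = s * exp t"
    using assms unfolding local_sol_branch_def by blast
  show ?thesis unfolding eventually_nhds_metric using dp H by (auto simp: dist_norm)
qed

lemma Rm_neg:
  assumes "Rm m z = s * exp t" "s = 1 \<or> s = -1"
  shows "Rm m (- z) = s * exp (- t)"
proof -
  have nz: "Pm m z \<noteq> 0" "Pm m (- z) \<noteq> 0" using Rm_nz[of m z] assms by auto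
  have "Rm m (- z) = inverse (Rm m z)" unfolding Rm_def using nz by simp
  also have "\<dots> = s * exp (- t)" using assms(2) by (auto simp: assms(1) exp_minus)
  finally show ?thesis .
qed

lemma dist_neg: "dist c (- x) = dist (- c) (x::complex)"
  by (metis dist_minus minus_minus)

lemma sym_branch:
  assumes bp: "local_sol_branch m s c zp" and bm: "local_sol_branch m s (- c) zm" and s: "s = 1 \<or> s = -1"
  shows "eventually (\<lambda>t. zm t = - zp (- t)) (nhds 0)"
proof -
  obtain \<delta>p \<epsilon>p where dp: "\<delta>p > 0" and
    Hp: "\<And>t. norm t < \<delta>p \<Longrightarrow> zp t \<in> ball c \<epsilon>p \<and> Rm m (zp t) = s * exp t \<and>
        (\<forall>z\<in>ball c \<epsilon>p. Rm m z = s * exp t \<longrightarrow> z = zp t)"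
    using bp unfolding local_sol_branch_def by blast
  obtain \<delta>m \<epsilon>m where dm: "\<delta>m > 0" and
    Hm: "\<And>t. norm t < \<delta>m \<Longrightarrow> zm t \<in> ball (- c) \<epsilon>m \<and> Rm m (zm t) = s * exp t \<and>
        (\<forall>z\<in>ball (- c) \<epsilon>m. Rm m z = s * exp t \<longrightarrow> z = zm t)"
    using bm unfolding local_sol_branch_def by blast
  have "zm t = - zp (- t)" if t: "norm t < min \<delta>p \<delta>m" for t
  proof -
    have tp: "norm (- t) < \<delta>p" and tm: "norm t < \<delta>m" using t by auto
    show ?thesis
    proof (cases "\<epsilon>m \<le> \<epsilon>p")
      case True
      have "- zm t \<in> ball c \<epsilon>p" using Hm[OF tm] True by (auto simp: dist_neg)
      moreover have "Rm m (- zm t) = s * exp (- t)" using Rm_neg Hm[OF tm] s by blast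
      ultimately have "- zm t = zp (- t)" using Hp[OF tp] by blast
      then show ?thesis by (metis minus_minus)
    next
      case False
      have "- zp (- t) \<in> ball (- c) \<epsilon>m" using Hp[OF tp] False by (auto simp: dist_neg[symmetric])
      moreover have "Rm m (- zp (- t)) = s * exp t" using Rm_neg[OF _ s, of m "zp (- t)" "- t"] Hp[OF tp] by simp
      ultimately show ?thesis using Hm[OF tm] by auto
    qed
  qed
  then show ?thesis unfolding eventually_nhds_metric using dp dm
    by (intro exI[of _ "min \<delta>p \<delta>m"]) (auto simp: dist_norm)
qed

lemma deriv_neg:
  assumes nz: "Pm m w \<noteq> 0" "Pm m (- w) \<noteq> 0"
  shows "deriv (Rm m) (- w) = deriv (Rm m) w / (Rm m w)^2"
proof -
  define B where "B = {z. Pm m (- z) \<noteq> 0} \<inter> {z. Pm m (- (- z)) \<noteq> 0}"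
  have oB: "open B" unfolding B_def
  proof (intro open_Int openA)
    have "open ((\<lambda>z. - z) -` {z. Pm m (- z) \<noteq> 0})"
      by (intro open_vimage openA continuous_intros)
    then show "open {z. Pm m (- (- z)) \<noteq> 0}" by (simp add: vimage_def)
  qed
  have wB: "w \<in> B" using nz unfolding B_def by simp
  have hol: "Rm m holomorphic_on {z. Pm m (- z) \<noteq> 0}" by (rule Rm_hol)
  have d1: "(Rm m has_field_derivative deriv (Rm m) w) (at w)"
    using holomorphic_derivI[OF hol openA] nz by auto
  have d2: "(Rm m has_field_derivative deriv (Rm m) (- w)) (at (- w))"
    using holomorphic_derivI[OF hol openA] nz by auto
  have Rnz: "Rm m w \<noteq> 0" unfolding Rm_def using nz by simp
  have di: "((\<lambda>z. inverse (Rm m z)) has_field_derivative - (deriv (Rm m) w * inverse (Rm m w ^ 2))) (at w)"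
    using DERIV_inverse_fun[OF d1 Rnz] by (simp add: numeral_2_eq_2)
  have eq: "inverse (Rm m z) = Rm m (- z)" if "z \<in> B" for z
    using that unfolding B_def Rm_def by auto
  have dh1: "((\<lambda>z. Rm m (- z)) has_field_derivative - (deriv (Rm m) w * inverse (Rm m w ^ 2))) (at w)"
    using has_field_derivative_transform_within_open[OF di oB wB eq] by simp
  have d2': "(Rm m has_field_derivative deriv (Rm m) (- w)) (at ((\<lambda>z. - z) w))" using d2 by simp
  have dh2: "((\<lambda>z. Rm m (- z)) has_field_derivative deriv (Rm m) (- w) * (- 1)) (at w)"
    using DERIV_chain2[OF d2' DERIV_minus[OF DERIV_ident]] by simp
  have "deriv (Rm m) (- w) * (- 1) = - (deriv (Rm m) w * inverse (Rm m w ^ 2))"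
    using DERIV_unique[OF dh2 dh1] .
  then show ?thesis by (simp add: divide_inverse)
qed

lemma bigo_t:
  fixes D F :: "complex \<Rightarrow> complex"
  assumes "(D has_field_derivative D') (at 0)" "D 0 = 0" "eventually (\<lambda>t. F t = D t) (at 0)"
  shows "F \<in> O[at 0](\<lambda>t. t)"
proof -
  have "((\<lambda>y. D y / y) \<longlongrightarrow> D') (at 0)" using assms(1,2) unfolding has_field_derivative_iff by simp
  then have "((\<lambda>y. norm (D y / y)) \<longlongrightarrow> norm D') (at 0)" by (rule tendsto_norm)
  then have ev: "eventually (\<lambda>y. norm (D y / y) < norm D' + 1) (at 0)" 
    by (rule order_tendstoD) simp
  have "eventually (\<lambda>y. norm (F y) \<le> (norm D' + 1) * norm y) (at (0::complex))"
  proof -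
    have "eventually (\<lambda>y. y \<noteq> (0::complex)) (at 0)" by (simp add: eventually_at_filter)
    with ev assms(3) show ?thesis
    proof (eventually_elim)
      case (elim y)
      then have "norm (D y) / norm y < norm D' + 1" by (simp add: norm_divide)
      then show ?case using elim by (simp add: divide_less_eq less_imp_le mult.commute)
    qed
  qed
  then show ?thesis by (intro bigoI) simp
qed

lemma bigo_1:
  fixes \<psi> F :: "complex \<Rightarrow> complex"
  assumes "(\<psi> has_field_derivative D) (at 0)" "eventually (\<lambda>t. F t = \<psi> t) (at 0)"
  shows "F \<in> O[at 0](\<lambda>_. 1)"
proof -
  have "isCont \<psi> 0" using DERIV_isCont[OF assms(1)] .
  then have "((\<lambda>y. norm (\<psi> y)) \<longlongrightarrow> norm (\<psi> 0)) (at 0)" by (intro tendsto_norm) (simp add: continuous_at)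
  then have ev: "eventually (\<lambda>y. norm (\<psi> y) < norm (\<psi> 0) + 1) (at 0)" 
    by (rule order_tendstoD) simp
  have "eventually (\<lambda>y. norm (F y) \<le> (norm (\<psi> 0) + 1) * norm ((\<lambda>_. 1::complex) y)) (at 0)"
    using ev assms(2) by eventually_elim simp
  then show ?thesis by (rule bigoI)
qed


lemma ev_at: "eventually P (nhds a) \<Longrightarrow> eventually P (at a)"
  unfolding eventually_at_filter by (erule eventually_mono) simp

lemma ev_neg: "eventually P (nhds (0::complex)) \<Longrightarrow> eventually (\<lambda>t. P (- t)) (nhds 0)"
  unfolding eventually_nhds_metric by (auto simp: dist_norm)

lemma part:
  assumes s: "s = 1 \<or> s = -1" and bp: "local_sol_branch m s c zp"
    and bm: "local_sol_branch m s (- c) zm"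
  shows "(\<lambda>t. deriv (Rm m) (zp t) - deriv (Rm m) (zm t)) \<in> O[at 0](\<lambda>t. t) \<and>
         (\<lambda>t. deriv (Rm m) (zp t)) \<in> O[at 0](\<lambda>_. 1)"
proof -
  obtain \<psi> D where d\<psi>: "(\<psi> has_field_derivative D) (at 0)"
    and ev\<psi>: "eventually (\<lambda>t. deriv (Rm m) (zp t) = \<psi> t) (nhds 0)"
    using branch[OF bp s] by blast
  have ev\<psi>': "eventually (\<lambda>t. deriv (Rm m) (zp (- t)) = \<psi> (- t)) (nhds 0)"
    using ev_neg[OF ev\<psi>] .
  have evR': "eventually (\<lambda>t. Rm m (zp (- t)) = s * exp (- t)) (nhds 0)"
    using ev_neg[OF branch_eq[OF bp]] .
  have evS: "eventually (\<lambda>t. zm t = - zp (- t)) (nhds 0)" using sym_branch[OF bp bm s] .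
  have ss: "s * s = 1" using s by auto
  have ev: "eventually (\<lambda>t. deriv (Rm m) (zp t) - deriv (Rm m) (zm t) = \<psi> t - \<psi> (- t) * (exp t * exp t)) (nhds 0)"
    using ev\<psi> ev\<psi>' evR' evS
  proof eventually_elim
    case (elim t)
    have nz: "Pm m (zp (- t)) \<noteq> 0" "Pm m (- zp (- t)) \<noteq> 0"
      using Rm_nz[of m "zp (- t)"] elim(3) s by auto
    have "deriv (Rm m) (zm t) = \<psi> (- t) / (s * exp (- t))^2"
      using deriv_neg[OF nz] elim by simp
    also have "\<dots> = \<psi> (- t) * (exp t * exp t)"
      using ss by (simp add: power2_eq_square exp_minus field_simps)
    finally show ?case using elim(1) by simp
  qed
  have dneg: "((\<lambda>t. \<psi> (- t)) has_field_derivative D * (- 1)) (at 0)"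
  proof -
    have "(\<psi> has_field_derivative D) (at ((\<lambda>t. - t) 0))" using d\<psi> by simp
    from DERIV_chain2[OF this DERIV_minus[OF DERIV_ident]] show ?thesis by simp
  qed
  obtain E where dE: "((\<lambda>t. \<psi> t - \<psi> (- t) * (exp t * exp t)) has_field_derivative E) (at 0)"
    using DERIV_diff[OF d\<psi> DERIV_mult[OF dneg DERIV_mult[OF DERIV_exp DERIV_exp]]] by blast
  have 1: "(\<lambda>t. deriv (Rm m) (zp t) - deriv (Rm m) (zm t)) \<in> O[at 0](\<lambda>t. t)"
    by (rule bigo_t[OF dE _ ev_at[OF ev]]) simp
  have 2: "(\<lambda>t. deriv (Rm m) (zp t)) \<in> O[at 0](\<lambda>_. 1)"
    by (rule bigo_1[OF d\<psi> ev_at[OF ev\<psi>]])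
  show ?thesis using 1 2 by blast
qed

theorem lemma4:
  shows "(\<forall>(m::nat) (r::real) zp zm.
            m \<ge> 3 \<and> r \<noteq> 0 \<and> Pm m (\<i> * of_real r) - Pm m (- (\<i> * of_real r)) = 0 \<and>
            local_sol_branch m 1 (\<i> * of_real r) zp \<and>
            local_sol_branch m 1 (- (\<i> * of_real r)) zm \<longrightarrow>
            (\<lambda>t. deriv (Rm m) (zp t) - deriv (Rm m) (zm t)) \<in> O[at 0](\<lambda>t. t) \<and>
            (\<lambda>t. deriv (Rm m) (zp t)) \<in> O[at 0](\<lambda>_. 1))
       \<and>
         (\<forall>(m::nat) (r::real) zp zm.
            m \<ge> 2 \<and> r \<noteq> 0 \<and> Pm m (\<i> * of_real r) + Pm m (- (\<i> * of_real r)) = 0 \<and>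
            local_sol_branch m (-1) (\<i> * of_real r) zp \<and>
            local_sol_branch m (-1) (- (\<i> * of_real r)) zm \<longrightarrow>
            (\<lambda>t. deriv (Rm m) (zp t) - deriv (Rm m) (zm t)) \<in> O[at 0](\<lambda>t. t) \<and>
            (\<lambda>t. deriv (Rm m) (zp t)) \<in> O[at 0](\<lambda>_. 1))"
  using part[of 1] part[of "-1"] by auto

end
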